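(* Let $\alpha_1,\alpha_2,\alpha_3\in\mathbb{R}$ and consider the planar system on $\{(\theta_{13},\tilde\rho_{31}):\theta_{13}\in\mathbb{R}/2\pi\mathbb{Z},\ \tilde\rho_{31}>0\}$ \[ \theta_{13}' = \frac{1}{\tilde\rho_{31}}\bigl(\sin\alpha_3+\sin\theta_{13}\bigr)-\bigl(\sin\alpha_1+\sin\alpha_2\bigr),\qquad \tilde\rho_{31}' = \tilde\rho_{31}\bigl(\cos\alpha_1+\cos\alpha_2\bigr)-\bigl(\cos\alpha_3+\cos\theta_{13}\bigr). \] (a) (Circling equilibria.) Suppose $\alpha_1+\alpha_2\equiv\pi \pmod{2\pi}$ and $\sin\alpha_1\sin\alpha_3>0$, and consider the circling equilibrium $(\theta_{13},\tilde\rho_{31})=(\pi-\alpha_3,\ \sin\alpha_3/\sin\alpha_1)$. It is locally stable if $\cos\alpha_3>0$ and unstable if $\cos\alpha_3<0$. (b) (Pure shape equilibria.) Let $\beta=(\alpha_1+\alpha_2)/2$ and suppose $\cos(\alpha_1-\beta)\cos(\alpha_3-\beta)>0$, and consider the pure shape equilibrium \[ (\theta_{13}^*,\tilde\rho_{31}^* )=\Bigl(\alpha_1+\alpha_2-\alpha_3,\ \frac{\cos(\alpha_3-\beta)}{\cos(\alpha_1-\beta)}\Bigr). \] It is locally stable if $2\cos(\alpha_1+\alpha_2-\alpha_3)+\cos\alpha_3<0$ and unstable if $2\cos(\alpha_1+\alpha_2-\alpha_3)+\cos\alpha_3>0$.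
   Context: Setting: three unit-speed agents in the plane with positions $\mathbf r_i$ and unit headings $\mathbf x_i$, $\dot{\mathbf r}_i=\mathbf x_i$, $\dot{\mathbf x}_i=u_i\mathbf x_i^{\perp}$. Agents 1 and 2 pursue each other (mutual pursuit) and agent 3 pursues agent 1, each using constant-bearing (CB) pursuit: agent $i$ maintains a fixed angle $\alpha_i$ between its heading and the line of sight to its pursuee, i.e. $R(\alpha_i)\mathbf x_i$ equals the unit vector from $\mathbf r_i$ to its pursuee's position, where $R(\beta)$ is counterclockwise rotation by $\beta$. The system is assumed to evolve on the set where all agents have attained their CB strategies. Shape variables: $\theta_{13}$ is the angle with $R(\theta_{13})\mathbf x_1=(\mathbf r_3-\mathbf r_1)/|\mathbf r_3-\mathbf r_1|$, $\rho_{31}=|\mathbf r_3-\mathbf r_1|$, $\rho_{12}=|\mathbf r_1-\mathbf r_2|$, $\tilde\rho_{31}=\rho_{31}/\rho_{12}$, and the prime denotes differentiation with respect to the rescaled time $\tau=\int_0^t \rho_{12}(s)^{-1}\,ds$. The displayed planar system is the resulting dynamics of the branch agent 3. Stability refers to local stability of the given equilibrium of this planar system. *)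

theory Defs
  imports "HOL-Analysis.Analysis"
begin

text \<open>Vector field of the branch agent 3 in shape coordinates (theta13, rho31-tilde),
  with theta13 lifted from R/2piZ to R (the field is 2pi-periodic in theta13).\<close>
definition branch_field :: "real \<Rightarrow> real \<Rightarrow> real \<Rightarrow> real \<times> real \<Rightarrow> real \<times> real" where
  "branch_field a1 a2 a3 = (\<lambda>(th, r).
     ((sin a3 + sin th) / r - (sin a1 + sin a2),
      r * (cos a1 + cos a2) - (cos a3 + cos th)))"

definition is_solution_on ::
  "(real \<times> real \<Rightarrow> real \<times> real) \<Rightarrow> real set \<Rightarrow> (real \<Rightarrow> real \<times> real) \<Rightarrow> bool" where
  "is_solution_on F I x \<longleftrightarrow>
     (\<forall>t\<in>I. snd (x t) > 0 \<and> (x has_vector_derivative F (x t)) (at t within I))"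

definition lyapunov_stable :: "(real \<times> real \<Rightarrow> real \<times> real) \<Rightarrow> real \<times> real \<Rightarrow> bool" where
  "lyapunov_stable F e \<longleftrightarrow>
     (\<forall>\<epsilon>>0. \<exists>\<delta>>0. \<forall>T x. T \<ge> 0 \<and> is_solution_on F {0..T} x \<and> dist (x 0) e < \<delta>
        \<longrightarrow> (\<forall>t\<in>{0..T}. dist (x t) e < \<epsilon>))"

definition locally_attractive :: "(real \<times> real \<Rightarrow> real \<times> real) \<Rightarrow> real \<times> real \<Rightarrow> bool" where
  "locally_attractive F e \<longleftrightarrow>
     (\<exists>\<delta>>0. \<forall>x. is_solution_on F {0..} x \<and> dist (x 0) e < \<delta> \<longrightarrow> (x \<longlongrightarrow> e) at_top)"

definition locally_stable :: "(real \<times> real \<Rightarrow> real \<times> real) \<Rightarrow> real \<times> real \<Rightarrow> bool" where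
  "locally_stable F e \<longleftrightarrow> F e = (0, 0) \<and> lyapunov_stable F e \<and> locally_attractive F e"

definition unstable :: "(real \<times> real \<Rightarrow> real \<times> real) \<Rightarrow> real \<times> real \<Rightarrow> bool" where
  "unstable F e \<longleftrightarrow> F e = (0, 0) \<and> \<not> lyapunov_stable F e"

end

theory Submission
  imports Defs "HOL-Real_Asymp.Real_Asymp"
begin


lemma lip_cont:
  fixes G :: "real \<times> real \<Rightarrow> real \<times> real"
  assumes L: "L > 0" and lip: "\<And>p q. dist (G p) (G q) \<le> L * dist p q"
  shows "continuous_on UNIV G"
  unfolding continuous_on_iff
proof (intro ballI allI impI)
  fix x and e :: real assume "e > 0"
  show "\<exists>d>0. \<forall>x'\<in>UNIV. dist x' x < d \<longrightarrow> dist (G x') (G x) < e"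
  proof (intro exI[of _ "e / L"] conjI ballI impI)
    show "e / L > 0" using L \<open>e>0\<close> by simp
    fix x' assume "dist x' x < e / L"
    then have "L * dist x' x < e" using L by (simp add: field_simps)
    then show "dist (G x') (G x) < e" using lip[of x' x] by linarith
  qed
qed

lemma local_exist:
  fixes G :: "real \<times> real \<Rightarrow> real \<times> real"
  assumes L: "L > 0" and lip: "\<And>p q. dist (G p) (G q) \<le> L * dist p q"
  shows "\<exists>y. y 0 = x0 \<and> (\<forall>t\<in>{0..1/(2*L)}. (y has_vector_derivative G (y t)) (at t within {0..1/(2*L)}))"
proof -
  define h where "h = 1/(2*L)"
  have h0: "h > 0" using L by (simp add: h_def)
  have hL: "h * L = 1/2" using L by (simp add: h_def)
  have cG: "continuous_on UNIV G" by (rule lip_cont[OF L lip])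
  define cl where "cl t = max 0 (min h t)" for t :: real
  have cl_in: "cl t \<in> {0..h}" for t using h0 by (auto simp: cl_def)
  have cl_id: "t \<in> {0..h} \<Longrightarrow> cl t = t" for t by (auto simp: cl_def)
  have ccl: "continuous_on UNIV cl" unfolding cl_def by (intro continuous_intros)
  define P where "P f t = x0 + integral {0..t} (\<lambda>s. G (apply_bcontfun f s))" for f :: "real \<Rightarrow>\<^sub>C (real \<times> real)" and t
  have cGf: "continuous_on A (\<lambda>s. G (apply_bcontfun f s))" for f A
    by (rule continuous_on_compose2[OF cG]) auto
  have Pder: "((P f) has_vector_derivative G (apply_bcontfun f t)) (at t within {0..h})" if "t \<in> {0..h}" for f t
    unfolding P_def
    by (rule derivative_eq_intros integral_has_vector_derivative[OF cGf that] | simp)+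
  have Pcont: "continuous_on {0..h} (P f)" for f
    using Pder continuous_on_eq_continuous_within has_vector_derivative_continuous by blast
  have Pbc: "(\<lambda>t. P f (cl t)) \<in> bcontfun" for f
  proof -
    have "continuous_on UNIV (\<lambda>t. P f (cl t))"
      by (rule continuous_on_compose2[OF Pcont ccl]) (use cl_in in auto)
    moreover have "bounded (range (\<lambda>t. P f (cl t)))"
    proof -
      have "compact (P f ` {0..h})" by (rule compact_continuous_image[OF Pcont]) simp
      then have "bounded (P f ` {0..h})" by (rule compact_imp_bounded)
      moreover have "range (\<lambda>t. P f (cl t)) \<subseteq> P f ` {0..h}" using cl_in by auto
      ultimately show ?thesis using bounded_subset by blast
    qed
    ultimately show ?thesis unfolding bcontfun_def by simp
  qed
  define \<Phi> where "\<Phi> f = Bcontfun (\<lambda>t. P f (cl t))" for f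
  have \<Phi>_app: "apply_bcontfun (\<Phi> f) t = P f (cl t)" for f t
    unfolding \<Phi>_def by (simp add: Bcontfun_inverse[OF Pbc])
  have contr: "dist (\<Phi> f) (\<Phi> g) \<le> (1/2) * dist f g" for f g
  proof (rule dist_bound)
    fix t
    have ct: "cl t \<in> {0..h}" by (rule cl_in)
    have i1: "(\<lambda>s. G (apply_bcontfun f s)) integrable_on {0..cl t}"
      by (rule integrable_continuous_interval[OF cGf])
    have i2: "(\<lambda>s. G (apply_bcontfun g s)) integrable_on {0..cl t}"
      by (rule integrable_continuous_interval[OF cGf])
    have "dist (P f (cl t)) (P g (cl t)) = norm (integral {0..cl t} (\<lambda>s. G (apply_bcontfun f s) - G (apply_bcontfun g s)))"
      unfolding P_def dist_norm using integral_diff[OF i1 i2] by simp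
    also have "\<dots> \<le> (L * dist f g) * Henstock_Kurzweil_Integration.content (cbox 0 (cl t))"
    proof (rule has_integral_bound)
      show "0 \<le> L * dist f g" using L by simp
      show "((\<lambda>s. G (apply_bcontfun f s) - G (apply_bcontfun g s)) has_integral
         integral {0..cl t} (\<lambda>s. G (apply_bcontfun f s) - G (apply_bcontfun g s))) (cbox 0 (cl t))"
        using integrable_diff[OF i1 i2] by (simp add: integrable_integral)
      fix s show "norm (G (apply_bcontfun f s) - G (apply_bcontfun g s)) \<le> L * dist f g"
      proof -
        have "norm (G (apply_bcontfun f s) - G (apply_bcontfun g s)) \<le> L * dist (apply_bcontfun f s) (apply_bcontfun g s)"
          using lip[of "apply_bcontfun f s" "apply_bcontfun g s"] by (simp add: dist_norm)
        also have "\<dots> \<le> L * dist f g" using dist_bounded[of f s g] L by (intro mult_left_mono) auto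
        finally show ?thesis .
      qed
    qed
    also have "\<dots> = (L * dist f g) * cl t" using ct by (simp only: cbox_interval content_real) simp
    also have "\<dots> \<le> (L * dist f g) * h" using ct L by (intro mult_left_mono) auto
    also have "\<dots> = (1/2) * dist f g" using hL by (simp add: algebra_simps)
    finally show "dist (apply_bcontfun (\<Phi> f) t) (apply_bcontfun (\<Phi> g) t) \<le> (1/2) * dist f g"
      by (simp add: \<Phi>_app)
  qed
  obtain f where ff: "\<Phi> f = f" using banach_fix_type[of "1/2" \<Phi>] contr by auto
  define y where "y = apply_bcontfun f"
  have yP: "t \<in> {0..h} \<Longrightarrow> y t = P f t" for t
    using \<Phi>_app[of f t] ff cl_id y_def by metis
  have "y 0 = x0" using yP[of 0] h0 by (simp add: P_def)
  moreover have "\<forall>t\<in>{0..h}. (y has_vector_derivative G (y t)) (at t within {0..h})"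
  proof
    fix t assume t: "t \<in> {0..h}"
    show "(y has_vector_derivative G (y t)) (at t within {0..h})"
    proof -
      have "(P f has_vector_derivative G (y t)) (at t within {0..h})" using Pder[OF t] by (simp add: y_def)
      then show ?thesis using has_vector_derivative_transform[OF t, of y "P f"] yP by blast
    qed
  qed
  ultimately show ?thesis unfolding h_def by blast
qed

lemma global_exist_n:
  fixes G :: "real \<times> real \<Rightarrow> real \<times> real"
  assumes L: "L > 0" and lip: "\<And>p q. dist (G p) (G q) \<le> L * dist p q"
  shows "\<exists>y. y 0 = x0 \<and> (\<forall>t\<in>{0..real n/(2*L)}. (y has_vector_derivative G (y t)) (at t within {0..real n/(2*L)}))"
proof (induction n arbitrary: x0)
  case 0
  obtain y where y: "y 0 = x0" "\<forall>t\<in>{0..1/(2*L)}. (y has_vector_derivative G (y t)) (at t within {0..1/(2*L)})"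
    using local_exist[OF L lip] by blast
  have "{0..real 0/(2*L)} \<subseteq> {0..1/(2*L)}" using L by auto
  then show ?case using y has_vector_derivative_within_subset by (metis subsetD)
next
  case (Suc n)
  define h where "h = 1/(2*L)"
  have h0: "h > 0" using L by (simp add: h_def)
  define a where "a = real n * h"
  have a0: "a \<ge> 0" using h0 by (simp add: a_def)
  have eqn: "real n/(2*L) = a" and eqs: "real (Suc n)/(2*L) = a + h"
    by (auto simp: a_def h_def add_divide_distrib)
  obtain y where y: "y 0 = x0" "\<forall>t\<in>{0..a}. (y has_vector_derivative G (y t)) (at t within {0..a})"
    using Suc.IH[of x0] unfolding eqn by blast
  obtain z where z: "z 0 = y a" "\<forall>t\<in>{0..h}. (z has_vector_derivative G (z t)) (at t within {0..h})"
    using local_exist[OF L lip, of "y a"] unfolding h_def[symmetric] by blast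
  define w where "w t = (if t \<in> {0..a} then y t else z (t - a))" for t
  have zs: "((\<lambda>t. z (t - a)) has_vector_derivative G (z (t - a))) (at t within {a..a+h})" if t: "t \<in> {a..a+h}" for t
  proof -
    have im: "(\<lambda>t. t - a) ` {a..a+h} = {0..h}"
      by (simp add: image_diff_atLeastAtMost) 
    have d1: "((\<lambda>t. t - a) has_vector_derivative 1) (at t within {a..a+h})"
      by (rule derivative_eq_intros | simp)+
    have d2: "(z has_vector_derivative G (z (t - a))) (at (t - a) within (\<lambda>t. t - a) ` {a..a+h})"
      unfolding im using z(2) t by auto
    show ?thesis using vector_diff_chain_within[OF d1 d2] by (simp add: o_def)
  qed
  have "\<forall>t\<in>{0..a+h}. (w has_vector_derivative G (w t)) (at t within {0..a+h})"
  proof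
    fix t assume t: "t \<in> {0..a+h}"
    have cl: "closure {0..a} \<inter> closure {a..a+h} = {a}" using a0 h0 by auto
    have "(w has_vector_derivative (if t \<in> {0..a} then G (y t) else G (z (t - a)))) (at t within {0..a+h})"
      unfolding w_def
    proof (rule has_vector_derivative_If_within_closures[where T="{a..a+h}"])
      show "t \<in> {0..a} \<union> {a..a+h}" using t by auto
      show "{0..a+h} = {0..a} \<union> {a..a+h}" using a0 h0 by auto
      show "(y has_vector_derivative G (y t)) (at t within {0..a} \<union> (closure {0..a} \<inter> closure {a..a+h}))"
        if "t \<in> {0..a} \<union> (closure {0..a} \<inter> closure {a..a+h})"
      proof -
        have e: "{0..a} \<union> (closure {0..a} \<inter> closure {a..a+h}) = {0..a}" using cl a0 by auto
        show ?thesis using that y(2) unfolding e by auto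
      qed
      show "((\<lambda>t. z (t - a)) has_vector_derivative G (z (t - a))) (at t within {a..a+h} \<union> (closure {0..a} \<inter> closure {a..a+h}))"
        if "t \<in> {a..a+h} \<union> (closure {0..a} \<inter> closure {a..a+h})"
      proof -
        have "{a..a+h} \<union> (closure {0..a} \<inter> closure {a..a+h}) = {a..a+h}" using cl h0 by auto
        then show ?thesis using zs that by auto
      qed
      show "y t = z (t - a)" if "t \<in> closure {0..a}" "t \<in> closure {a..a+h}" using that cl z(1) by auto
      show "G (y t) = G (z (t - a))" if "t \<in> closure {0..a}" "t \<in> closure {a..a+h}" using that cl z(1) by auto
    qed
    moreover have "(if t \<in> {0..a} then G (y t) else G (z (t - a))) = G (w t)" by (simp add: w_def)
    ultimately show "(w has_vector_derivative G (w t)) (at t within {0..a+h})" by simp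
  qed
  moreover have "w 0 = x0" using y(1) a0 by (simp add: w_def)
  ultimately show ?case unfolding eqs by blast
qed

lemma global_exist:
  fixes G :: "real \<times> real \<Rightarrow> real \<times> real"
  assumes L: "L > 0" and lip: "\<And>p q. dist (G p) (G q) \<le> L * dist p q" and T: "T \<ge> 0"
  shows "\<exists>y. y 0 = x0 \<and> (\<forall>t\<in>{0..T}. (y has_vector_derivative G (y t)) (at t within {0..T}))"
proof -
  obtain n :: nat where n: "T * (2*L) \<le> real n" using real_arch_simple by blast
  have sub: "{0..T} \<subseteq> {0..real n/(2*L)}" using n L by (auto simp: field_simps)
  obtain y where y: "y 0 = x0" "\<forall>t\<in>{0..real n/(2*L)}. (y has_vector_derivative G (y t)) (at t within {0..real n/(2*L)})"
    using global_exist_n[OF L lip] by blast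
  show ?thesis using y sub has_vector_derivative_within_subset by (metis subsetD)
qed



definition Jm :: "real \<Rightarrow> real \<Rightarrow> real \<Rightarrow> real \<Rightarrow> real \<times> real \<Rightarrow> real \<times> real" where
  "Jm a b c d z = (a * fst z + b * snd z, c * fst z + d * snd z)"

definition Vq :: "real \<Rightarrow> real \<Rightarrow> real \<Rightarrow> real \<Rightarrow> real \<times> real \<Rightarrow> real" where
  "Vq a b c d z = (a*d - b*c) * (z \<bullet> z) + Jm a b c d z \<bullet> Jm a b c d z"

definition DVq :: "real \<Rightarrow> real \<Rightarrow> real \<Rightarrow> real \<Rightarrow> real \<times> real \<Rightarrow> real \<times> real \<Rightarrow> real" where
  "DVq a b c d z v = 2*(a*d - b*c) * (z \<bullet> v) + 2 * (Jm a b c d z \<bullet> Jm a b c d v)"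

lemma Jm_add: "Jm a b c d (x + y) = Jm a b c d x + Jm a b c d y"
  by (simp add: Jm_def algebra_simps)

lemma bl_Jm: "bounded_linear (Jm a b c d)"
  unfolding Jm_def by (intro bounded_linear_intros)

lemma cs2: "(a*x + b*y)^2 \<le> (a^2 + b^2) * (x^2 + y^2)" for a b x y :: real
proof -
  have "(a^2 + b^2) * (x^2 + y^2) - (a*x + b*y)^2 = (a*y - b*x)^2" by (simp add: power2_eq_square algebra_simps)
  then show ?thesis by (metis diff_ge_0_iff_ge zero_le_power2)
qed

lemma norm_sq: "norm z ^ 2 = fst z ^2 + snd z ^2" for z :: "real \<times> real"
  by (cases z) (simp add: norm_Pair)

lemma inner_sq: "z \<bullet> z = norm z ^ 2" for z :: "real \<times> real"
  by (simp add: power2_norm_eq_inner)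

lemma normJ: "norm (Jm a b c d z) ^ 2 \<le> (a^2+b^2+c^2+d^2) * norm z ^ 2"
proof -
  have "norm (Jm a b c d z) ^ 2 = (a * fst z + b * snd z)^2 + (c * fst z + d * snd z)^2"
    by (simp add: Jm_def norm_sq)
  also have "\<dots> \<le> (a^2+b^2) * (fst z^2 + snd z^2) + (c^2+d^2) * (fst z^2 + snd z^2)"
    by (intro add_mono cs2)
  also have "\<dots> = (a^2+b^2+c^2+d^2) * norm z ^ 2" by (simp add: norm_sq algebra_simps)
  finally show ?thesis .
qed

lemma Jlow: "(a*d-b*c)^2 * norm z ^ 2 \<le> (a^2+b^2+c^2+d^2) * norm (Jm a b c d z) ^ 2"
proof -
  define p where "p = a * fst z + b * snd z"
  define q where "q = c * fst z + d * snd z"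
  have "(a*d-b*c)^2 * norm z ^ 2 = (d*p - b*q)^2 + ((-c)*p + a*q)^2"
    by (simp only: norm_sq) (simp add: p_def q_def power2_eq_square algebra_simps)
  also have "\<dots> \<le> (d^2+b^2) * (p^2+q^2) + (c^2+a^2)*(p^2+q^2)"
    using cs2[of d p "-b" q] cs2[of "-c" p a q] by (intro add_mono) (simp_all add: algebra_simps)
  also have "\<dots> = (a^2+b^2+c^2+d^2) * norm (Jm a b c d z) ^ 2"
    by (simp add: Jm_def norm_sq p_def q_def algebra_simps)
  finally show ?thesis .
qed

lemma DVq_add: "DVq a b c d z (v + w) = DVq a b c d z v + DVq a b c d z w"
  by (simp add: DVq_def Jm_add inner_add_right algebra_simps)

lemma DVq_lin: "DVq a b c d z (Jm a b c d z) = 2*(a+d) * (Jm a b c d z \<bullet> Jm a b c d z)"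
  by (cases z) (simp add: DVq_def Jm_def power2_eq_square algebra_simps)

lemma DVq_bound: "\<bar>DVq a b c d z v\<bar> \<le> (2*\<bar>a*d-b*c\<bar> + 2*(a^2+b^2+c^2+d^2)) * norm z * norm v"
proof -
  define N where "N = a^2+b^2+c^2+d^2"
  have N0: "N \<ge> 0" by (simp add: N_def)
  have nJ: "norm (Jm a b c d x) \<le> sqrt N * norm x" for x
  proof -
    have "norm (Jm a b c d x) ^2 \<le> (sqrt N * norm x)^2" using normJ[of a b c d x] N0
      by (simp add: N_def power_mult_distrib)
    then show ?thesis using N0 by (meson power2_le_imp_le real_sqrt_ge_zero norm_ge_zero mult_nonneg_nonneg)
  qed
  have "\<bar>DVq a b c d z v\<bar> \<le> 2*\<bar>a*d-b*c\<bar> * \<bar>z \<bullet> v\<bar> + 2 * \<bar>Jm a b c d z \<bullet> Jm a b c d v\<bar>"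
    unfolding DVq_def
    by (metis (no_types, opaque_lifting) abs_mult abs_numeral abs_triangle_ineq mult.assoc)
  also have "\<dots> \<le> 2*\<bar>a*d-b*c\<bar> * (norm z * norm v) + 2 * (norm (Jm a b c d z) * norm (Jm a b c d v))"
    by (intro add_mono mult_left_mono Cauchy_Schwarz_ineq2) auto
  also have "norm (Jm a b c d z) * norm (Jm a b c d v) \<le> (sqrt N * norm z) * (sqrt N * norm v)"
    using N0 by (intro mult_mono nJ) auto
  also have "(sqrt N * norm z) * (sqrt N * norm v) = N * norm z * norm v" using N0
    by (simp add: algebra_simps)
  finally show ?thesis by (simp add: N_def algebra_simps)
qed

lemma Vq_lower: "(a*d-b*c) * norm z ^ 2 \<le> Vq a b c d z"
  by (simp add: Vq_def inner_sq)

lemma Vq_upper: "a*d-b*c \<ge> 0 \<Longrightarrow> Vq a b c d z \<le> ((a*d-b*c) + (a^2+b^2+c^2+d^2)) * norm z ^ 2"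
  using normJ[of a b c d z] by (simp add: Vq_def inner_sq algebra_simps)

lemma N_pos: "a*d-b*c > 0 \<Longrightarrow> a^2+b^2+c^2+d^2 > 0" for a b c d :: real
proof -
  assume D: "a*d-b*c > 0"
  have "2*(a*d) \<le> a^2+d^2" using sum_squares_bound[of a d] by (simp add: algebra_simps) 
  moreover have "-2*(b*c) \<le> b^2+c^2" using sum_squares_bound[of b "-c"] by (simp add: algebra_simps)
  ultimately show ?thesis using D by linarith
qed

lemma core_err:
  fixes F :: "real \<times> real \<Rightarrow> real \<times> real"
  assumes Fe: "F e = 0" and der: "(F has_derivative Jm a b c d) (at e)"
    and D: "a*d-b*c > 0" and tau: "a + d \<noteq> 0"
  shows "\<exists>\<rho>>0. \<forall>p. norm (p - e) < \<rho> \<longrightarrow>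
     \<bar>DVq a b c d (p - e) (F p) - 2*(a+d) * (Jm a b c d (p-e) \<bullet> Jm a b c d (p-e))\<bar>
       \<le> \<bar>a+d\<bar> * ((a*d-b*c)^2/(a^2+b^2+c^2+d^2)) * norm (p - e) ^ 2"
proof -
  define N where "N = a^2+b^2+c^2+d^2"
  define Dt where "Dt = a*d-b*c"
  define K where "K = 2*\<bar>Dt\<bar> + 2*N"
  define M where "M = \<bar>a+d\<bar> * (Dt^2/N)"
  have N0: "N > 0" using N_pos[OF D] by (simp add: N_def)
  have K0: "K > 0" using N0 by (simp add: K_def)
  have M0: "M > 0" using N0 tau D by (simp add: M_def Dt_def)
  obtain \<rho> where \<rho>: "\<rho> > 0" "\<forall>y. norm (y - e) < \<rho> \<longrightarrow> norm (F y - F e - Jm a b c d (y - e)) \<le> (M/K) * norm (y - e)"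
    using der[unfolded has_derivative_at_alt] M0 K0 by (meson divide_pos_pos)
  show ?thesis
  proof (intro exI[of _ \<rho>] conjI allI impI)
    show "\<rho> > 0" by fact
    fix p :: "real \<times> real"
    assume p: "norm (p - e) < \<rho>"
    define y where "y = p - e"
    define R where "R = F p - Jm a b c d y"
    have R: "norm R \<le> (M/K) * norm y" using \<rho>(2)[rule_format, of p] p Fe by (simp add: R_def y_def)
    have Fp: "F p = Jm a b c d y + R" by (simp add: R_def)
    have "DVq a b c d y (F p) - 2*(a+d) * (Jm a b c d y \<bullet> Jm a b c d y) = DVq a b c d y R"
      unfolding Fp DVq_add DVq_lin by simp
    then have "\<bar>DVq a b c d y (F p) - 2*(a+d) * (Jm a b c d y \<bullet> Jm a b c d y)\<bar> \<le> K * norm y * norm R"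
      using DVq_bound[where a=a and b=b and c=c and d=d and z=y and v=R] by (simp add: K_def N_def Dt_def)
    also have "\<dots> \<le> K * norm y * ((M/K) * norm y)"
      using R K0 by (intro mult_left_mono) auto
    also have "\<dots> = M * norm y ^ 2" using K0 by (simp add: power2_eq_square)
    finally show "\<bar>DVq a b c d (p - e) (F p) - 2*(a+d) * (Jm a b c d (p-e) \<bullet> Jm a b c d (p-e))\<bar>
       \<le> \<bar>a+d\<bar> * ((a*d-b*c)^2/(a^2+b^2+c^2+d^2)) * norm (p - e) ^ 2"
      by (simp add: y_def M_def Dt_def N_def)
  qed
qed

lemma core_stable:
  fixes F :: "real \<times> real \<Rightarrow> real \<times> real"
  assumes Fe: "F e = 0" and der: "(F has_derivative Jm a b c d) (at e)"
    and D: "a*d-b*c > 0" and tau: "a + d < 0"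
  shows "\<exists>\<rho>>0. \<exists>k>0. \<forall>p. norm (p - e) < \<rho> \<longrightarrow> DVq a b c d (p - e) (F p) \<le> - k * Vq a b c d (p - e)"
proof -
  define N where "N = a^2+b^2+c^2+d^2"
  define Dt where "Dt = a*d-b*c"
  define mu where "mu = Dt^2/N"
  have N0: "N > 0" using N_pos[OF D] by (simp add: N_def)
  have mu0: "mu > 0" using N0 D by (simp add: mu_def Dt_def)
  obtain \<rho> where \<rho>: "\<rho> > 0" "\<forall>p. norm (p - e) < \<rho> \<longrightarrow>
     \<bar>DVq a b c d (p - e) (F p) - 2*(a+d) * (Jm a b c d (p-e) \<bullet> Jm a b c d (p-e))\<bar>
       \<le> \<bar>a+d\<bar> * mu * norm (p - e) ^ 2"
    using core_err[OF Fe der D] tau by (auto simp: mu_def Dt_def N_def)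
  define k where "k = -(a+d) * mu / (Dt + N)"
  have k0: "k > 0" using tau mu0 D N0 by (simp add: k_def Dt_def)
  show ?thesis
  proof (rule exI[of _ \<rho>], rule conjI[OF \<rho>(1)], rule exI[of _ k], rule conjI[OF k0], intro allI impI)
    fix p :: "real \<times> real" assume p: "norm (p - e) < \<rho>"
    define y where "y = p - e"
    have e1: "DVq a b c d y (F p) \<le> 2*(a+d) * (Jm a b c d y \<bullet> Jm a b c d y) + (-(a+d)) * mu * norm y ^ 2"
    proof -
      have h: "\<bar>DVq a b c d y (F p) - 2*(a+d) * (Jm a b c d y \<bullet> Jm a b c d y)\<bar> \<le> (-(a+d)) * mu * norm y ^ 2"
        using \<rho>(2)[rule_format, OF p] abs_of_neg[OF tau] by (simp add: y_def)
      then show ?thesis unfolding abs_le_iff by linarith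
    qed
    have jl: "mu * norm y ^ 2 \<le> Jm a b c d y \<bullet> Jm a b c d y"
      using Jlow[where a=a and b=b and c=c and d=d and z=y] N0 by (simp add: mu_def inner_sq Dt_def N_def field_simps)
    have "2*(a+d) * (Jm a b c d y \<bullet> Jm a b c d y) \<le> 2*(a+d) * (mu * norm y ^ 2)"
      using jl tau by (intro mult_left_mono_neg) auto
    with e1 have e2: "DVq a b c d y (F p) \<le> (a+d) * mu * norm y ^ 2" by (simp add: algebra_simps)
    have vu: "Vq a b c d y \<le> (Dt + N) * norm y ^ 2" using Vq_upper[where a=a and b=b and c=c and d=d and z=y] D by (simp add: Dt_def N_def)
    have "-k * Vq a b c d y \<ge> -k * ((Dt + N) * norm y ^ 2)" using vu k0 by simp
    also have "-k * ((Dt + N) * norm y ^ 2) = (a+d) * mu * norm y ^ 2"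
      using D N0 by (simp add: k_def Dt_def field_simps)
    finally show "DVq a b c d (p - e) (F p) \<le> - k * Vq a b c d (p - e)" using e2 by (simp add: y_def)
  qed
qed

lemma core_unstable:
  fixes F :: "real \<times> real \<Rightarrow> real \<times> real"
  assumes Fe: "F e = 0" and der: "(F has_derivative Jm a b c d) (at e)"
    and D: "a*d-b*c > 0" and tau: "a + d > 0"
  shows "\<exists>\<rho>>0. \<exists>k>0. \<forall>p. norm (p - e) < \<rho> \<longrightarrow> DVq a b c d (p - e) (F p) \<ge> k * Vq a b c d (p - e)"
proof -
  define N where "N = a^2+b^2+c^2+d^2"
  define Dt where "Dt = a*d-b*c"
  define mu where "mu = Dt^2/N"
  have N0: "N > 0" using N_pos[OF D] by (simp add: N_def)
  have mu0: "mu > 0" using N0 D by (simp add: mu_def Dt_def)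
  obtain \<rho> where \<rho>: "\<rho> > 0" "\<forall>p. norm (p - e) < \<rho> \<longrightarrow>
     \<bar>DVq a b c d (p - e) (F p) - 2*(a+d) * (Jm a b c d (p-e) \<bullet> Jm a b c d (p-e))\<bar>
       \<le> \<bar>a+d\<bar> * mu * norm (p - e) ^ 2"
    using core_err[OF Fe der D] tau by (auto simp: mu_def Dt_def N_def)
  define k where "k = (a+d) * mu / (Dt + N)"
  have k0: "k > 0" using tau mu0 D N0 by (simp add: k_def Dt_def)
  show ?thesis
  proof (rule exI[of _ \<rho>], rule conjI[OF \<rho>(1)], rule exI[of _ k], rule conjI[OF k0], intro allI impI)
    fix p :: "real \<times> real" assume p: "norm (p - e) < \<rho>"
    define y where "y = p - e"
    have e1: "DVq a b c d y (F p) \<ge> 2*(a+d) * (Jm a b c d y \<bullet> Jm a b c d y) - (a+d) * mu * norm y ^ 2"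
    proof -
      have h: "\<bar>DVq a b c d y (F p) - 2*(a+d) * (Jm a b c d y \<bullet> Jm a b c d y)\<bar> \<le> (a+d) * mu * norm y ^ 2"
        using \<rho>(2)[rule_format, OF p] abs_of_pos[OF tau] by (simp add: y_def)
      then show ?thesis unfolding abs_le_iff by linarith
    qed
    have jl: "mu * norm y ^ 2 \<le> Jm a b c d y \<bullet> Jm a b c d y"
      using Jlow[where a=a and b=b and c=c and d=d and z=y] N0 by (simp add: mu_def inner_sq Dt_def N_def field_simps)
    have "2*(a+d) * (Jm a b c d y \<bullet> Jm a b c d y) \<ge> 2*(a+d) * (mu * norm y ^ 2)"
      using jl tau by (intro mult_left_mono) auto
    with e1 have e2: "DVq a b c d y (F p) \<ge> (a+d) * mu * norm y ^ 2" by (simp add: algebra_simps)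
    have vu: "Vq a b c d y \<le> (Dt + N) * norm y ^ 2" using Vq_upper[where a=a and b=b and c=c and d=d and z=y] D by (simp add: Dt_def N_def)
    have "k * Vq a b c d y \<le> k * ((Dt + N) * norm y ^ 2)" using vu k0 by simp
    also have "k * ((Dt + N) * norm y ^ 2) = (a+d) * mu * norm y ^ 2"
      using D N0 by (simp add: k_def Dt_def field_simps)
    finally show "DVq a b c d (p - e) (F p) \<ge> k * Vq a b c d (p - e)" using e2 by (simp add: y_def)
  qed
qed



lemma W_deriv:
  assumes "(x has_vector_derivative v) (at t within S)"
  shows "((\<lambda>s. Vq a b c d (x s - e)) has_real_derivative DVq a b c d (x t - e) v) (at t within S)"
proof -
  have d1: "((\<lambda>s. x s - e) has_derivative (\<lambda>h. h *\<^sub>R v)) (at t within S)"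
    using assms by (auto simp: has_vector_derivative_def intro!: derivative_eq_intros)
  have d2: "((\<lambda>s. Jm a b c d (x s - e)) has_derivative (\<lambda>h. h *\<^sub>R Jm a b c d v)) (at t within S)"
  proof -
    have "((\<lambda>s. Jm a b c d (x s - e)) has_derivative (\<lambda>h. Jm a b c d (h *\<^sub>R v))) (at t within S)"
      by (rule bounded_linear.has_derivative[OF bl_Jm d1])
    moreover have "(\<lambda>h. Jm a b c d (h *\<^sub>R v)) = (\<lambda>h. h *\<^sub>R Jm a b c d v)"
      by (auto simp: Jm_def algebra_simps)
    ultimately show ?thesis by simp
  qed
  have "((\<lambda>s. Vq a b c d (x s - e)) has_derivative
      (\<lambda>h. (a*d-b*c) * ((x t - e) \<bullet> (h *\<^sub>R v) + (h *\<^sub>R v) \<bullet> (x t - e)) +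
         (Jm a b c d (x t - e) \<bullet> (h *\<^sub>R Jm a b c d v) + (h *\<^sub>R Jm a b c d v) \<bullet> Jm a b c d (x t - e)))) (at t within S)"
    unfolding Vq_def
    by (intro has_derivative_add has_derivative_mult_right has_derivative_inner d1 d2)
  moreover have "(\<lambda>h. (a*d-b*c) * ((x t - e) \<bullet> (h *\<^sub>R v) + (h *\<^sub>R v) \<bullet> (x t - e)) +
         (Jm a b c d (x t - e) \<bullet> (h *\<^sub>R Jm a b c d v) + (h *\<^sub>R Jm a b c d v) \<bullet> Jm a b c d (x t - e)))
     = (\<lambda>h. DVq a b c d (x t - e) v * h)"
    by (auto simp: DVq_def inner_commute algebra_simps)
  ultimately show ?thesis unfolding has_field_derivative_def by simp
qed

lemma incr_lemma:
  fixes g g' :: "real \<Rightarrow> real"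
  assumes t: "0 \<le> t" "t \<le> T"
    and der: "\<forall>s\<in>{0..T}. (g has_real_derivative g' s) (at s within {0..T})"
    and pos: "\<And>s. 0 < s \<Longrightarrow> s < t \<Longrightarrow> g' s \<ge> 0"
  shows "g 0 \<le> g t"
proof (rule DERIV_nonneg_imp_increasing_open[OF t(1)])
  fix s assume s: "0 < s" "s < t"
  have "s \<in> interior {0..T}" using s t by auto
  then have "at s within {0..T} = at s" by (rule at_within_interior)
  then have "(g has_real_derivative g' s) (at s)" using der s t by (metis atLeastAtMost_iff less_imp_le order.trans)
  then show "\<exists>y. (g has_real_derivative y) (at s) \<and> 0 \<le> y" using pos s by blast
next
  have "continuous_on {0..T} g"
    using der DERIV_continuous continuous_on_eq_continuous_within by blast
  then show "continuous_on {0..t} g" by (rule continuous_on_subset) (use t in auto)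
qed

lemma sol_cont: "is_solution_on F I x \<Longrightarrow> continuous_on I x"
  unfolding is_solution_on_def
  using has_vector_derivative_continuous continuous_on_eq_continuous_within by blast

lemma sol_restrict: "is_solution_on F I x \<Longrightarrow> J \<subseteq> I \<Longrightarrow> is_solution_on F J x"
  unfolding is_solution_on_def using has_vector_derivative_within_subset by blast

lemma first_exit:
  fixes x :: "real \<Rightarrow> real \<times> real"
  assumes cont: "continuous_on {0..T} x" and T: "0 \<le> T"
    and ex: "\<exists>t\<in>{0..T}. norm (x t - e) \<ge> r" and start: "norm (x 0 - e) < r"
  obtains t1 where "t1 \<in> {0..T}" "t1 > 0" "norm (x t1 - e) \<ge> r" "\<And>s. 0 \<le> s \<Longrightarrow> s < t1 \<Longrightarrow> norm (x s - e) < r"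
proof -
  define S where "S = {0..T} \<inter> (\<lambda>s. norm (x s - e)) -` {r..}"
  have cS: "closed S" unfolding S_def
    by (rule continuous_closed_preimage) (auto intro!: continuous_intros cont)
  have neS: "S \<noteq> {}" using ex by (auto simp: S_def)
  have bS: "bdd_below S" by (rule bdd_belowI[of _ 0]) (auto simp: S_def)
  define t1 where "t1 = Inf S"
  have t1S: "t1 \<in> S" unfolding t1_def by (rule closed_contains_Inf[OF neS bS cS])
  have t1pos: "t1 > 0"
  proof -
    have "t1 \<ge> 0" using t1S by (auto simp: S_def)
    moreover have "t1 \<noteq> 0" using t1S start by (auto simp: S_def)
    ultimately show ?thesis by simp
  qed
  have below: "norm (x s - e) < r" if "0 \<le> s" "s < t1" for s
  proof (rule ccontr)
    assume "\<not> norm (x s - e) < r"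
    then have "s \<in> S" using that t1S by (auto simp: S_def)
    then have "t1 \<le> s" unfolding t1_def by (rule cInf_lower[OF _ bS])
    then show False using that by simp
  qed
  show ?thesis using that t1S t1pos below by (auto simp: S_def)
qed

lemma stay_in:
  fixes F :: "real \<times> real \<Rightarrow> real \<times> real"
  assumes D: "a*d-b*c > 0"
    and k: "k > 0"
    and lyap: "\<And>p. norm (p - e) < \<rho> \<Longrightarrow> DVq a b c d (p - e) (F p) \<le> - k * Vq a b c d (p - e)"
    and sol: "is_solution_on F {0..T} x" and T: "0 \<le> T"
    and r: "0 < r" "r \<le> \<rho>"
    and start: "((a*d-b*c) + (a^2+b^2+c^2+d^2)) * norm (x 0 - e) ^ 2 < (a*d-b*c) * r^2"
  shows "\<forall>t\<in>{0..T}. norm (x t - e) < r"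
proof (rule ccontr)
  define Dt where "Dt = a*d-b*c"
  define N where "N = a^2+b^2+c^2+d^2"
  assume "\<not> (\<forall>t\<in>{0..T}. norm (x t - e) < r)"
  then have ex: "\<exists>t\<in>{0..T}. norm (x t - e) \<ge> r" by (force simp: not_less)
  have N0: "N \<ge> 0" by (simp add: N_def)
  have st: "norm (x 0 - e) < r"
  proof (rule ccontr)
    assume "\<not> norm (x 0 - e) < r"
    then have "r^2 \<le> norm (x 0 - e) ^ 2" using r by (simp add: power_mono)
    then have "Dt * r^2 \<le> (Dt + N) * norm (x 0 - e) ^ 2" using D N0
      by (metis Dt_def le_add_same_cancel1 mult_mono order_less_imp_le zero_le_power2 order.trans)
    then show False using start by (simp add: Dt_def N_def)
  qed
  obtain t1 where t1: "t1 \<in> {0..T}" "t1 > 0" "norm (x t1 - e) \<ge> r" "\<And>s. 0 \<le> s \<Longrightarrow> s < t1 \<Longrightarrow> norm (x s - e) < r"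
    using first_exit[OF sol_cont[OF sol] T ex st] by blast
  have der: "\<forall>s\<in>{0..T}. ((\<lambda>s. - Vq a b c d (x s - e)) has_real_derivative - DVq a b c d (x s - e) (F (x s))) (at s within {0..T})"
    using sol unfolding is_solution_on_def by (auto intro!: derivative_eq_intros W_deriv)
  have "- Vq a b c d (x 0 - e) \<le> - Vq a b c d (x t1 - e)"
  proof (rule incr_lemma[where g="\<lambda>s. - Vq a b c d (x s - e)", OF _ _ der])
    show "0 \<le> t1" "t1 \<le> T" using t1 by auto
    fix s assume s: "0 < s" "s < t1"
    have "norm (x s - e) < \<rho>" using t1(4)[of s] s r by auto
    then have "DVq a b c d (x s - e) (F (x s)) \<le> - k * Vq a b c d (x s - e)" by (rule lyap)
    moreover have "Vq a b c d (x s - e) \<ge> 0" using Vq_lower[where a=a and b=b and c=c and d=d and z="x s - e"] D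
      by (meson mult_nonneg_nonneg order_less_imp_le order_trans zero_le_power2)
    moreover have "k * Vq a b c d (x s - e) \<ge> 0" using calculation(2) k by simp
    ultimately show "0 \<le> - DVq a b c d (x s - e) (F (x s))" by linarith
  qed
  then have "Vq a b c d (x t1 - e) \<le> Vq a b c d (x 0 - e)" by simp
  moreover have "Dt * r^2 \<le> Vq a b c d (x t1 - e)"
  proof -
    have "r^2 \<le> norm (x t1 - e)^2" using t1(3) r by (simp add: power_mono)
    then have "Dt * r^2 \<le> Dt * norm (x t1 - e)^2" using D by (simp add: Dt_def)
    then show ?thesis using Vq_lower[where a=a and b=b and c=c and d=d and z="x t1 - e"] by (simp add: Dt_def)
  qed
  moreover have "Vq a b c d (x 0 - e) \<le> (Dt + N) * norm (x 0 - e) ^ 2"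
    using Vq_upper[where a=a and b=b and c=c and d=d and z="x 0 - e"] D by (simp add: Dt_def N_def)
  ultimately show False using start by (simp add: Dt_def N_def)
qed

lemma delta_choice:
  fixes m M r :: real
  assumes "m > 0" "M \<ge> m" "r > 0"
  shows "\<exists>\<delta>>0. \<forall>z::real\<times>real. norm z < \<delta> \<longrightarrow> M * norm z ^ 2 < m * r^2"
proof (intro exI[of _ "r * sqrt (m / M)"] conjI allI impI)
  have M0: "M > 0" using assms by simp
  show "r * sqrt (m / M) > 0" using assms M0 by simp
  fix z :: "real \<times> real" assume z: "norm z < r * sqrt (m / M)"
  have "norm z ^ 2 < (r * sqrt (m / M))^2" using z by (simp add: power_strict_mono)
  also have "\<dots> = r^2 * (m / M)" using assms M0 by (simp add: power_mult_distrib)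
  finally have nz: "norm z ^ 2 < r^2 * (m / M)" .
  have "M * norm z ^ 2 < M * (r^2 * (m / M))" using nz M0 by (rule mult_strict_left_mono)
  also have "\<dots> = m * r^2" using M0 by simp
  finally show "M * norm z ^ 2 < m * r^2" .
qed

lemma stable_generic:
  fixes F :: "real \<times> real \<Rightarrow> real \<times> real"
  assumes Fe: "F e = (0, 0)" and der: "(F has_derivative Jm a b c d) (at e)"
    and D: "a*d-b*c > 0" and tau: "a + d < 0"
  shows "locally_stable F e"
proof -
  define Dt where "Dt = a*d-b*c"
  define N where "N = a^2+b^2+c^2+d^2"
  have Fe0: "F e = 0" using Fe by (simp add: zero_prod_def)
  obtain \<rho> k where \<rho>: "\<rho> > 0" "k > 0"
    and lyap: "\<And>p. norm (p - e) < \<rho> \<Longrightarrow> DVq a b c d (p - e) (F p) \<le> - k * Vq a b c d (p - e)"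
    using core_stable[OF Fe0 der D tau] by blast
  have N0: "N \<ge> 0" by (simp add: N_def)
  have dch: "\<exists>\<delta>>0. \<forall>z::real\<times>real. norm z < \<delta> \<longrightarrow> (Dt + N) * norm z ^ 2 < Dt * r^2" if "r > 0" for r
    using delta_choice[of Dt "Dt + N" r] D N0 that by (simp add: Dt_def)
  have ly: "lyapunov_stable F e"
    unfolding lyapunov_stable_def
  proof (intro allI impI)
    fix \<epsilon> :: real assume \<epsilon>: "\<epsilon> > 0"
    define r where "r = min \<epsilon> \<rho>"
    have r: "r > 0" "r \<le> \<rho>" "r \<le> \<epsilon>" using \<epsilon> \<rho> by (auto simp: r_def)
    obtain \<delta> where \<delta>: "\<delta> > 0" "\<And>z::real\<times>real. norm z < \<delta> \<Longrightarrow> (Dt + N) * norm z ^ 2 < Dt * r^2"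
      using dch[OF r(1)] by blast
    show "\<exists>\<delta>>0. \<forall>T x. 0 \<le> T \<and> is_solution_on F {0..T} x \<and> dist (x 0) e < \<delta> \<longrightarrow> (\<forall>t\<in>{0..T}. dist (x t) e < \<epsilon>)"
    proof (intro exI[of _ \<delta>] conjI allI impI ballI)
      show "\<delta> > 0" by fact
      fix T x t assume H: "0 \<le> T \<and> is_solution_on F {0..T} x \<and> dist (x 0) e < \<delta>" and t: "t \<in> {0..T}"
      have st: "(Dt + N) * norm (x 0 - e) ^ 2 < Dt * r^2" using \<delta>(2) H by (simp add: dist_norm)
      have "norm (x t - e) < r"
        using stay_in[OF D \<rho>(2) lyap, where T=T and x=x and r=r] H r st t by (auto simp: Dt_def N_def)
      then show "dist (x t) e < \<epsilon>" using r by (simp add: dist_norm)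
    qed
  qed
  have la: "locally_attractive F e"
    unfolding locally_attractive_def
  proof -
    obtain \<delta> where \<delta>: "\<delta> > 0" "\<And>z::real\<times>real. norm z < \<delta> \<Longrightarrow> (Dt + N) * norm z ^ 2 < Dt * \<rho>^2"
      using dch[OF \<rho>(1)] by blast
    show "\<exists>\<delta>>0. \<forall>x. is_solution_on F {0..} x \<and> dist (x 0) e < \<delta> \<longrightarrow> (x \<longlongrightarrow> e) at_top"
    proof (intro exI[of _ \<delta>] conjI allI impI)
      show "\<delta> > 0" by fact
      fix x assume H: "is_solution_on F {0..} x \<and> dist (x 0) e < \<delta>"
      have st: "(Dt + N) * norm (x 0 - e) ^ 2 < Dt * \<rho>^2" using \<delta>(2) H by (simp add: dist_norm)
      define W0 where "W0 = Vq a b c d (x 0 - e)"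
      have bound: "Dt * norm (x t - e) ^ 2 \<le> W0 * exp (- k * t)" if t: "t \<ge> 0" for t
      proof -
        have solt: "is_solution_on F {0..t} x" using H sol_restrict[of F "{0..}" x "{0..t}"] by auto
        have inb: "\<forall>s\<in>{0..t}. norm (x s - e) < \<rho>"
          using stay_in[OF D \<rho>(2) lyap solt t \<rho>(1) order_refl] st by (simp add: Dt_def N_def)
        have der: "\<forall>s\<in>{0..t}. ((\<lambda>s. - (exp (k * s) * Vq a b c d (x s - e))) has_real_derivative
             - (k * exp (k * s) * Vq a b c d (x s - e) + exp (k * s) * DVq a b c d (x s - e) (F (x s)))) (at s within {0..t})"
          using solt unfolding is_solution_on_def by (auto intro!: derivative_eq_intros W_deriv)
        have "- (exp (k * 0) * Vq a b c d (x 0 - e)) \<le> - (exp (k * t) * Vq a b c d (x t - e))"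
        proof (rule incr_lemma[OF t order_refl der])
          fix s assume s: "0 < s" "s < t"
          have "DVq a b c d (x s - e) (F (x s)) \<le> - k * Vq a b c d (x s - e)" using inb s lyap by auto
          then have "exp (k * s) * DVq a b c d (x s - e) (F (x s)) \<le> exp (k * s) * (- k * Vq a b c d (x s - e))"
            by (rule mult_left_mono) simp
          then show "0 \<le> - (k * exp (k * s) * Vq a b c d (x s - e) + exp (k * s) * DVq a b c d (x s - e) (F (x s)))"
            by (simp add: algebra_simps)
        qed
        then have "exp (k * t) * Vq a b c d (x t - e) \<le> W0" by (simp add: W0_def)
        then have "Vq a b c d (x t - e) \<le> W0 * exp (- k * t)"
          by (simp add: exp_minus field_simps)
        then show ?thesis using Vq_lower[where a=a and b=b and c=c and d=d and z="x t - e"] by (simp add: Dt_def)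
      qed
      have W00: "W0 \<ge> 0" using Vq_lower[where a=a and b=b and c=c and d=d and z="x 0 - e"] D unfolding W0_def
        by (meson mult_nonneg_nonneg order_less_imp_le order_trans zero_le_power2)
      have lim0: "((\<lambda>t. sqrt (W0 / Dt * exp (- k * t))) \<longlongrightarrow> 0) at_top"
      proof -
        have "((\<lambda>t. exp (- k * t)) \<longlongrightarrow> 0) at_top" using \<rho>(2) by real_asymp
        then have "((\<lambda>t. W0 / Dt * exp (- k * t)) \<longlongrightarrow> W0 / Dt * 0) at_top" by (rule tendsto_mult_left)
        then have "((\<lambda>t. sqrt (W0 / Dt * exp (- k * t))) \<longlongrightarrow> sqrt (W0 / Dt * 0)) at_top" by (rule tendsto_real_sqrt)
        then show ?thesis by simp
      qed
      have "((\<lambda>t. norm (x t - e)) \<longlongrightarrow> 0) at_top"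
      proof (rule tendsto_sandwich[OF _ _ tendsto_const lim0])
        show "\<forall>\<^sub>F t in at_top. 0 \<le> norm (x t - e)" by simp
        show "\<forall>\<^sub>F t in at_top. norm (x t - e) \<le> sqrt (W0 / Dt * exp (- k * t))"
        proof (rule eventually_at_top_linorderI[of 0])
          fix t :: real assume t: "t \<ge> 0"
          have "norm (x t - e) ^ 2 \<le> W0 / Dt * exp (- k * t)"
            using bound[OF t] D by (simp add: Dt_def field_simps)
          then show "norm (x t - e) \<le> sqrt (W0 / Dt * exp (- k * t))"
            by (simp add: real_le_rsqrt)
        qed
      qed
      then show "(x \<longlongrightarrow> e) at_top"
        by (simp add: tendsto_norm_zero_iff Lim_null[of x e])
    qed
  qed
  show ?thesis unfolding locally_stable_def using Fe ly la by blast
qed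

lemma norm_dist_e: "dist e p = norm (p - e)" for p e :: "real \<times> real"
  by (simp add: dist_norm norm_minus_commute)

lemma unstable_generic:
  fixes F :: "real \<times> real \<Rightarrow> real \<times> real"
  assumes Fe: "F e = (0, 0)" and der: "(F has_derivative Jm a b c d) (at e)"
    and D: "a*d-b*c > 0" and tau: "a + d > 0"
    and \<rho>0: "\<rho>0 > 0" and L: "L > 0"
    and sndpos: "\<And>p. norm (p - e) \<le> \<rho>0 \<Longrightarrow> snd p > 0"
    and lip: "\<And>p q. norm (p - e) \<le> \<rho>0 \<Longrightarrow> norm (q - e) \<le> \<rho>0 \<Longrightarrow> dist (F p) (F q) \<le> L * dist p q"
  shows "unstable F e"
proof -
  define Dt where "Dt = a*d-b*c"
  define N where "N = a^2+b^2+c^2+d^2"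
  have N0: "N \<ge> 0" by (simp add: N_def)
  have Fe0: "F e = 0" using Fe by (simp add: zero_prod_def)
  obtain \<rho>1 k where \<rho>1: "\<rho>1 > 0" "k > 0"
    and lyap: "\<And>p. norm (p - e) < \<rho>1 \<Longrightarrow> DVq a b c d (p - e) (F p) \<ge> k * Vq a b c d (p - e)"
    using core_unstable[OF Fe0 der D tau] by blast
  define r where "r = min \<rho>0 (\<rho>1/2)"
  have r: "r > 0" "r \<le> \<rho>0" "r < \<rho>1" using \<rho>0 \<rho>1 by (auto simp: r_def)
  define K where "K = cball e r"
  have K: "convex K" "closed K" "K \<noteq> {}" using r by (auto simp: K_def)
  have inK: "p \<in> K \<longleftrightarrow> norm (p - e) \<le> r" for p by (simp add: K_def norm_dist_e)
  define G where "G p = F (closest_point K p)" for p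
  have cpK: "closest_point K p \<in> K" for p by (rule closest_point_in_set[OF K(2,3)])
  have Glip: "dist (G p) (G q) \<le> L * dist p q" for p q
  proof -
    have "dist (G p) (G q) \<le> L * dist (closest_point K p) (closest_point K q)"
      unfolding G_def using cpK[of p] cpK[of q] inK[of "closest_point K p"] inK[of "closest_point K q"] r
      by (intro lip) auto
    also have "\<dots> \<le> L * dist p q" using closest_point_lipschitz[OF K] L by (intro mult_left_mono) auto
    finally show ?thesis .
  qed
  have GF: "p \<in> K \<Longrightarrow> G p = F p" for p by (simp add: G_def closest_point_self)
  have "\<not> lyapunov_stable F e"
    unfolding lyapunov_stable_def
  proof
    assume "\<forall>\<epsilon>>0. \<exists>\<delta>>0. \<forall>T x. 0 \<le> T \<and> is_solution_on F {0..T} x \<and> dist (x 0) e < \<delta> \<longrightarrow> (\<forall>t\<in>{0..T}. dist (x t) e < \<epsilon>)"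
    then obtain \<delta> where \<delta>: "\<delta> > 0" and st0: "\<forall>T x. 0 \<le> T \<and> is_solution_on F {0..T} x \<and> dist (x 0) e < \<delta> \<longrightarrow> (\<forall>t\<in>{0..T}. dist (x t) e < r)"
      using r(1) by auto
    have st: "\<And>T x t. 0 \<le> T \<Longrightarrow> is_solution_on F {0..T} x \<Longrightarrow> dist (x 0) e < \<delta> \<Longrightarrow> t \<in> {0..T} \<Longrightarrow> dist (x t) e < r"
      using st0 by blast
    define n0 where "n0 = min \<delta> r / 2"
    have n0: "n0 > 0" "n0 < \<delta>" "n0 < r" using \<delta> r by (auto simp: n0_def)
    define x0 where "x0 = e + (n0, 0)"
    have nx0: "norm (x0 - e) = n0" using n0 by (simp add: x0_def)
    define W0 where "W0 = Vq a b c d (x0 - e)"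
    have W0pos: "W0 > 0"
    proof -
      have "Dt * n0^2 > 0" using D n0 by (simp add: Dt_def)
      then show ?thesis using Vq_lower[where a=a and b=b and c=c and d=d and z="x0 - e"] nx0
        by (simp add: W0_def Dt_def)
    qed
    obtain m :: nat where m: "(Dt + N) * r^2 / W0 < 1 + k * real m"
    proof -
      obtain m :: nat where "((Dt + N) * r^2 / W0) / k < real m" using reals_Archimedean2 by blast
      then have "(Dt + N) * r^2 / W0 < real m * k" using \<rho>1(2) by (simp only: pos_divide_less_eq)
      then have "(Dt + N) * r^2 / W0 < k * real m" by (simp add: mult.commute)
      then show ?thesis using that[of m] by simp
    qed
    define T where "T = real m"
    have T0: "T \<ge> 0" by (simp add: T_def)
    have big: "(Dt + N) * r^2 < W0 * exp (k * T)"
    proof -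
      have "1 + k * T \<le> exp (k * T)" by (rule exp_ge_add_one_self_aux) (use \<rho>1 T0 in simp)
      then have "(Dt + N) * r^2 / W0 < exp (k * T)" using m unfolding T_def by linarith
      then show ?thesis using W0pos by (simp add: field_simps)
    qed
    obtain y where y0: "y 0 = x0" and yd: "\<forall>t\<in>{0..T}. (y has_vector_derivative G (y t)) (at t within {0..T})"
      using global_exist[OF L Glip T0] by blast
    have ycont: "continuous_on {0..T} y"
      using yd has_vector_derivative_continuous continuous_on_eq_continuous_within by blast
    have ex: "\<exists>t\<in>{0..T}. norm (y t - e) \<ge> r"
    proof (rule ccontr)
      assume "\<not> (\<exists>t\<in>{0..T}. norm (y t - e) \<ge> r)"
      then have inb: "\<forall>t\<in>{0..T}. norm (y t - e) < r" by (auto simp: not_le)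
      have yF: "\<forall>t\<in>{0..T}. (y has_vector_derivative F (y t)) (at t within {0..T})"
      proof
        fix t assume t: "t \<in> {0..T}"
        have "y t \<in> K" using inb t inK less_imp_le by blast
        then have "G (y t) = F (y t)" by (rule GF)
        then show "(y has_vector_derivative F (y t)) (at t within {0..T})" using yd t by metis
      qed
      have der2: "\<forall>s\<in>{0..T}. ((\<lambda>s. exp (- k * s) * Vq a b c d (y s - e)) has_real_derivative
             (- k * exp (- k * s) * Vq a b c d (y s - e) + exp (- k * s) * DVq a b c d (y s - e) (F (y s)))) (at s within {0..T})"
        using yF by (auto intro!: derivative_eq_intros W_deriv)
      have "exp (- k * 0) * Vq a b c d (y 0 - e) \<le> exp (- k * T) * Vq a b c d (y T - e)"
      proof (rule incr_lemma[OF T0 order_refl der2])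
        fix s assume s: "0 < s" "s < T"
        have "s \<in> {0..T}" using s by auto
        then have "norm (y s - e) < r" using inb by blast
        then have "norm (y s - e) < \<rho>1" using r by linarith
        then have "k * Vq a b c d (y s - e) \<le> DVq a b c d (y s - e) (F (y s))" by (rule lyap)
        then have "exp (- k * s) * (k * Vq a b c d (y s - e)) \<le> exp (- k * s) * DVq a b c d (y s - e) (F (y s))"
          by (rule mult_left_mono) simp
        then show "0 \<le> - k * exp (- k * s) * Vq a b c d (y s - e) + exp (- k * s) * DVq a b c d (y s - e) (F (y s))"
          by (simp add: algebra_simps)
      qed
      then have "W0 \<le> exp (- k * T) * Vq a b c d (y T - e)" by (simp add: W0_def y0)
      then have "W0 * exp (k * T) \<le> Vq a b c d (y T - e)"
        by (simp add: exp_minus field_simps)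
      also have "\<dots> \<le> (Dt + N) * norm (y T - e) ^ 2"
        using Vq_upper[where a=a and b=b and c=c and d=d and z="y T - e"] D by (simp add: Dt_def N_def)
      also have "\<dots> \<le> (Dt + N) * r ^ 2"
      proof -
        have "norm (y T - e) \<le> r" using inb T0 by (simp add: less_imp_le)
        then have "norm (y T - e) ^ 2 \<le> r ^ 2" by (simp add: power_mono)
        then show ?thesis using D N0 by (intro mult_left_mono) (auto simp: Dt_def)
      qed
      finally show False using big by simp
    qed
    have sty: "norm (y 0 - e) < r" using y0 nx0 n0 by simp
    obtain t1 where t1: "t1 \<in> {0..T}" "t1 > 0" "norm (y t1 - e) \<ge> r" "\<And>s. 0 \<le> s \<Longrightarrow> s < t1 \<Longrightarrow> norm (y s - e) < r"
      using first_exit[OF ycont T0 ex sty] by blast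
    have allK: "norm (y s - e) \<le> r" if s: "s \<in> {0..t1}" for s
    proof -
      define C where "C = {0..t1} \<inter> (\<lambda>s. norm (y s - e)) -` {..r}"
      have yc1: "continuous_on {0..t1} y" by (rule continuous_on_subset[OF ycont]) (use t1(1) in auto)
      have "continuous_on {0..t1} (\<lambda>s. norm (y s - e))" by (intro continuous_intros yc1)
      then have cC: "closed C" unfolding C_def
        by (rule continuous_closed_preimage) auto
      have sub: "{0..<t1} \<subseteq> C" using t1(4) by (auto simp: C_def less_imp_le)
      have "closure {0..<t1} \<subseteq> C" using closure_minimal[OF sub cC] .
      then have "{0..t1} \<subseteq> C" using t1(2) by simp
      then show ?thesis using s by (auto simp: C_def)
    qed
    have sol: "is_solution_on F {0..t1} y"
      unfolding is_solution_on_def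
    proof
      fix s assume s: "s \<in> {0..t1}"
      have nK: "norm (y s - e) \<le> r" by (rule allK[OF s])
      have "snd (y s) > 0" using nK r by (intro sndpos) simp
      moreover have "(y has_vector_derivative F (y s)) (at s within {0..t1})"
      proof -
        have "s \<in> {0..T}" using s t1(1) by auto
        then have "(y has_vector_derivative G (y s)) (at s within {0..T})" using yd by blast
        then have "(y has_vector_derivative G (y s)) (at s within {0..t1})"
          by (rule has_vector_derivative_within_subset) (use t1(1) in auto)
        then show ?thesis using GF[of "y s"] inK nK by simp
      qed
      ultimately show "0 < snd (y s) \<and> (y has_vector_derivative F (y s)) (at s within {0..t1})" by blast
    qed
    have "dist (y t1) e < r" using st[OF _ sol] t1 y0 nx0 n0 by (simp add: dist_norm)
    then show False using t1(3) by (simp add: dist_norm)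
  qed
  then show ?thesis unfolding unstable_def using Fe by blast
qed



lemma frac_aux: "r > 0 \<Longrightarrow> r' > 0 \<Longrightarrow>
  (S + u) / r - (S + w) / r' = (u - w) / r + (S + w) * ((r' - r) / (r * r'))" for S u w r r' :: real
proof -
  assume r: "r > 0" "r' > 0"
  have "(S + w) * ((r' - r) / (r * r')) = (S + w) / r - (S + w) / r'"
    using r by (simp add: diff_divide_distrib right_diff_distrib)
  moreover have "(u - w) / r = (S+u)/r - (S+w)/r" by (simp add: diff_divide_distrib add_divide_distrib)
  ultimately show ?thesis by simp
qed

lemma sin_lip: "\<bar>sin x - sin y\<bar> \<le> \<bar>x - y\<bar>" for x y :: real
proof -
  have "\<bar>sin x - sin y\<bar> = 2 * \<bar>sin ((x - y) / 2)\<bar> * \<bar>cos ((x + y) / 2)\<bar>"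
    by (simp add: sin_diff_sin abs_mult)
  also have "\<dots> \<le> 2 * \<bar>(x - y) / 2\<bar> * 1"
    by (intro mult_mono abs_sin_x_le_abs_x) auto
  finally show ?thesis by simp
qed

lemma cos_lip: "\<bar>cos x - cos y\<bar> \<le> \<bar>x - y\<bar>" for x y :: real
proof -
  have "\<bar>cos x - cos y\<bar> = 2 * \<bar>sin ((x + y) / 2)\<bar> * \<bar>sin ((y - x) / 2)\<bar>"
    by (simp add: cos_diff_cos abs_mult)
  also have "\<dots> \<le> 2 * 1 * \<bar>(y - x) / 2\<bar>"
    by (intro mult_mono abs_sin_x_le_abs_x) auto
  finally show ?thesis by simp
qed

lemma branch_lip:
  assumes k: "\<kappa> > 0" and p: "snd p \<ge> \<kappa>" and q: "snd q \<ge> \<kappa>"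
  shows "dist (branch_field a1 a2 a3 p) (branch_field a1 a2 a3 q)
     \<le> (1/\<kappa> + 1 + 2/\<kappa>^2 + \<bar>cos a1 + cos a2\<bar>) * dist p q"
proof -
  obtain t r where pp: "p = (t, r)" by (cases p)
  obtain t' r' where qq: "q = (t', r')" by (cases q)
  have r: "r \<ge> \<kappa>" "r' \<ge> \<kappa>" using p q pp qq by auto
  have r0: "r > 0" "r' > 0" using r k by auto
  define C where "C = cos a1 + cos a2"
  define n where "n = dist p q"
  have dt: "\<bar>t - t'\<bar> \<le> n"
  proof -
    have "\<bar>t - t'\<bar> = norm (t - t')" by simp
    also have "\<dots> \<le> norm (t - t', r - r')" by (rule norm_fst_le)
    also have "\<dots> = norm (p - q)" by (simp add: pp qq)
    finally show ?thesis by (simp add: n_def dist_norm)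
  qed
  have dr: "\<bar>r - r'\<bar> \<le> n"
  proof -
    have "\<bar>r - r'\<bar> = norm (r - r')" by simp
    also have "\<dots> \<le> norm (t - t', r - r')" by (rule norm_snd_le)
    also have "\<dots> = norm (p - q)" by (simp add: pp qq)
    finally show ?thesis by (simp add: n_def dist_norm)
  qed
  define d1 where "d1 = (sin a3 + sin t) / r - (sin a3 + sin t') / r'"
  define d2 where "d2 = r * C - r' * C - (cos t - cos t')"
  have e1: "d1 = (sin t - sin t') / r + (sin a3 + sin t') * ((r' - r) / (r * r'))"
    unfolding d1_def using frac_aux[OF r0] .
  have n0: "n \<ge> 0" by (simp add: n_def)
  have b1: "\<bar>(sin t - sin t') / r\<bar> \<le> n / \<kappa>"
  proof -
    have "\<bar>(sin t - sin t') / r\<bar> = \<bar>sin t - sin t'\<bar> / r" using r0 by simp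
    also have "\<dots> \<le> n / r" using sin_lip[of t t'] dt r0 by (simp add: divide_right_mono)
    also have "\<dots> \<le> n / \<kappa>" using divide_left_mono[OF r(1) n0] r0 k by simp
    finally show ?thesis .
  qed
  have b2: "\<bar>(sin a3 + sin t') * ((r' - r) / (r * r'))\<bar> \<le> 2 * (n / \<kappa>^2)"
  proof -
    have s2: "\<bar>sin a3 + sin t'\<bar> \<le> 2" using abs_sin_le_one[of a3] abs_sin_le_one[of t'] by linarith
    have rr: "r * r' > 0" using r0 by simp
    have kk: "\<kappa>^2 \<le> r * r'" using r k by (simp add: power2_eq_square mult_mono)
    have "\<bar>(r' - r) / (r * r')\<bar> = \<bar>r - r'\<bar> / (r * r')" using rr by (simp add: abs_minus_commute)
    also have "\<dots> \<le> n / (r * r')" using dr rr by (simp add: divide_right_mono)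
    also have "\<dots> \<le> n / \<kappa>^2" using divide_left_mono[OF kk n0] rr k by simp
    finally have "\<bar>(r' - r) / (r * r')\<bar> \<le> n / \<kappa>^2" .
    then show ?thesis unfolding abs_mult using s2 by (intro mult_mono) auto
  qed
  have bd1: "\<bar>d1\<bar> \<le> n / \<kappa> + 2 * (n / \<kappa>^2)" unfolding e1
    by (rule order_trans[OF abs_triangle_ineq add_mono[OF b1 b2]])
  have bd2: "\<bar>d2\<bar> \<le> \<bar>C\<bar> * n + n"
  proof -
    have "d2 = C * (r - r') - (cos t - cos t')" by (simp add: d2_def algebra_simps)
    then have "\<bar>d2\<bar> \<le> \<bar>C\<bar> * \<bar>r - r'\<bar> + \<bar>cos t - cos t'\<bar>" by (simp add: abs_mult[symmetric] abs_triangle_ineq4)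
    also have "\<dots> \<le> \<bar>C\<bar> * n + n" using dr cos_lip[of t t'] dt by (intro add_mono mult_left_mono) auto
    finally show ?thesis .
  qed
  have "dist (branch_field a1 a2 a3 p) (branch_field a1 a2 a3 q) = norm (d1, d2)"
  proof -
    have "branch_field a1 a2 a3 p - branch_field a1 a2 a3 q = (d1, d2)"
      by (simp add: pp qq branch_field_def d1_def d2_def C_def)
    then show ?thesis by (simp add: dist_norm)
  qed
  also have "\<dots> \<le> \<bar>d1\<bar> + \<bar>d2\<bar>" by (simp add: norm_Pair sqrt_sum_squares_le_sum_abs)
  also have "\<dots> \<le> n / \<kappa> + 2 * (n / \<kappa>^2) + (\<bar>C\<bar> * n + n)" using bd1 bd2 by simp
  also have "\<dots> = (1/\<kappa> + 1 + 2/\<kappa>^2 + \<bar>C\<bar>) * n" by (simp add: ring_distribs)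
  finally show ?thesis by (simp add: C_def n_def)
qed


lemma branch_field_alt: "branch_field a1 a2 a3 = (\<lambda>p. ((sin a3 + sin (fst p)) / snd p - (sin a1 + sin a2),
      snd p * (cos a1 + cos a2) - (cos a3 + cos (fst p))))"
  by (auto simp: branch_field_def fun_eq_iff)

lemma branch_deriv:
  assumes r0: "r0 \<noteq> 0"
  shows "(branch_field a1 a2 a3 has_derivative
     Jm (cos th0 / r0) (-(sin a3 + sin th0) / r0^2) (sin th0) (cos a1 + cos a2)) (at (th0, r0))"
  unfolding branch_field_alt
  apply (rule derivative_eq_intros refl | simp add: r0)+
  apply (auto simp: Jm_def fun_eq_iff power2_eq_square field_simps r0)
  done

lemma snd_near:
  assumes "norm (p - (th0, r0)) \<le> r0 / 2" "r0 > 0"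
  shows "snd p \<ge> r0 / 2"
proof -
  obtain t r where pp: "p = (t, r)" by (cases p)
  have "\<bar>r - r0\<bar> = norm (r - r0)" by simp
  also have "\<dots> \<le> norm (t - th0, r - r0)" by (rule norm_snd_le)
  also have "\<dots> \<le> r0 / 2" using assms(1) by (simp add: pp)
  finally have "\<bar>r - r0\<bar> \<le> r0 / 2" .
  then have "r \<ge> r0 / 2" by (simp only: abs_le_iff) linarith
  then show ?thesis using pp by simp
qed

lemma branch_stable:
  assumes r0: "r0 > 0" and Fe: "branch_field a1 a2 a3 (th0, r0) = (0, 0)"
    and tau: "cos th0 / r0 + (cos a1 + cos a2) < 0"
    and D: "(cos th0 / r0) * (cos a1 + cos a2) - (-(sin a3 + sin th0) / r0^2) * sin th0 > 0"
  shows "locally_stable (branch_field a1 a2 a3) (th0, r0)"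
  by (rule stable_generic[OF Fe branch_deriv D tau]) (use r0 in simp)

lemma branch_unstable:
  assumes r0: "r0 > 0" and Fe: "branch_field a1 a2 a3 (th0, r0) = (0, 0)"
    and tau: "cos th0 / r0 + (cos a1 + cos a2) > 0"
    and D: "(cos th0 / r0) * (cos a1 + cos a2) - (-(sin a3 + sin th0) / r0^2) * sin th0 > 0"
  shows "unstable (branch_field a1 a2 a3) (th0, r0)"
proof (rule unstable_generic[OF Fe branch_deriv D tau])
  show "r0 \<noteq> 0" using r0 by simp
  show "r0 / 2 > 0" using r0 by simp
  show "1/(r0/2) + 1 + 2/(r0/2)^2 + \<bar>cos a1 + cos a2\<bar> > 0" using r0
    by (intro add_pos_nonneg add_nonneg_nonneg) auto
  fix p assume "norm (p - (th0, r0)) \<le> r0 / 2"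
  then show "snd p > 0" using snd_near[of p th0 r0] r0 by simp
next
  fix p q assume p: "norm (p - (th0, r0)) \<le> r0 / 2" and q: "norm (q - (th0, r0)) \<le> r0 / 2"
  show "dist (branch_field a1 a2 a3 p) (branch_field a1 a2 a3 q)
     \<le> (1/(r0/2) + 1 + 2/(r0/2)^2 + \<bar>cos a1 + cos a2\<bar>) * dist p q"
    by (rule branch_lip) (use r0 snd_near[OF p r0] snd_near[OF q r0] in auto)
qed

lemma partb_alg:
  fixes c1 c3 S Cb ct qq sa3 ca3 s12 c12 :: real
  assumes c1c3: "c1*c3 > 0"
  and h1: "s12 = 2*S*c1" and h2: "c12 = 2*Cb*c1"
  and h3: "sa3 + qq = 2*S*c3" and h4: "ca3 + ct = 2*Cb*c3"
  and h5: "Cb*ct + S*qq = c3"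
  shows "(sa3 + qq)/(c3/c1) - s12 = 0" "(c3/c1)*c12 - (ca3 + ct) = 0"
    "ct/(c3/c1) + c12 = (c1/c3)*(2*ct + ca3)"
    "(ct/(c3/c1))*c12 - (-(sa3+qq)/(c3/c1)^2)*qq = 2*c1^2"
proof -
  have c1: "c1 \<noteq> 0" and c3: "c3 \<noteq> 0" using c1c3 by auto
  show "(sa3 + qq)/(c3/c1) - s12 = 0" unfolding h3 h1 using c1 c3 by (simp add: field_simps)
  show "(c3/c1)*c12 - (ca3 + ct) = 0" unfolding h4 h2 using c1 c3 by (simp add: field_simps)
  have ca3: "ca3 = 2*Cb*c3 - ct" using h4 by simp
  show "ct/(c3/c1) + c12 = (c1/c3)*(2*ct + ca3)" unfolding ca3 h2 using c1 c3 by (simp add: field_simps)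
  have "(ct/(c3/c1))*c12 - (-(sa3+qq)/(c3/c1)^2)*qq = (2*c1^2/c3) * (Cb*ct + S*qq)"
    unfolding h3 h2 using c1 c3 by (simp add: field_simps power2_eq_square)
  also have "\<dots> = 2*c1^2" unfolding h5 using c3 by simp
  finally show "(ct/(c3/c1))*c12 - (-(sa3+qq)/(c3/c1)^2)*qq = 2*c1^2" .
qed

lemma part_a:
  fixes a1 a2 a3 :: real
  assumes k: "\<exists>k::int. a1 + a2 = pi + 2 * of_int k * pi" and s: "sin a1 * sin a3 > 0"
  shows "(cos a3 > 0 \<longrightarrow> locally_stable (branch_field a1 a2 a3) (pi - a3, sin a3 / sin a1)) \<and>
       (cos a3 < 0 \<longrightarrow> unstable (branch_field a1 a2 a3) (pi - a3, sin a3 / sin a1))"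
proof -
  obtain k :: int where kk: "a1 + a2 = pi + 2 * of_int k * pi" using k by blast
  have "a2 = (pi - a1) + 2 * pi * of_int k" using kk by (simp add: algebra_simps)
  then have "sin a2 = sin (pi - a1) \<and> cos a2 = cos (pi - a1)" using sin_cos_eq_iff by blast
  then have s2: "sin a2 = sin a1" and c2: "cos a2 = - cos a1" by auto
  have s1: "sin a1 \<noteq> 0" and s3: "sin a3 \<noteq> 0" using s by auto
  define r0 where "r0 = sin a3 / sin a1"
  have r0: "r0 > 0" using s unfolding r0_def by (auto simp: zero_less_divide_iff zero_less_mult_iff)
  have st: "sin (pi - a3) = sin a3" and ct: "cos (pi - a3) = - cos a3" by auto
  have Fe: "branch_field a1 a2 a3 (pi - a3, r0) = (0, 0)"
    using s1 s3 by (simp add: branch_field_def st ct s2 c2 r0_def)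
  have D: "(cos (pi - a3) / r0) * (cos a1 + cos a2) - (-(sin a3 + sin (pi - a3)) / r0^2) * sin (pi - a3) > 0"
  proof -
    have "sin a3 * sin a3 > 0" using s3 not_real_square_gt_zero by blast
    then have "2 * sin a3 * sin a3 / r0^2 > 0" using r0 by simp
    then show ?thesis by (simp add: st ct c2)
  qed
  have tau: "cos (pi - a3) / r0 + (cos a1 + cos a2) = - cos a3 / r0" by (simp add: ct c2)
  show ?thesis
  proof (intro conjI impI)
    assume "cos a3 > 0"
    then have "cos (pi - a3) / r0 + (cos a1 + cos a2) < 0" unfolding tau using r0 by simp
    then show "locally_stable (branch_field a1 a2 a3) (pi - a3, sin a3 / sin a1)"
      using branch_stable[OF r0 Fe _ D] by (simp add: r0_def)
  next
    assume "cos a3 < 0"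
    then have "cos (pi - a3) / r0 + (cos a1 + cos a2) > 0" unfolding tau using r0 by (simp add: divide_neg_pos)
    then show "unstable (branch_field a1 a2 a3) (pi - a3, sin a3 / sin a1)"
      using branch_unstable[OF r0 Fe _ D] by (simp add: r0_def)
  qed
qed

lemma part_b:
  fixes a1 a2 a3 :: real
  shows "let b = (a1 + a2) / 2;
         e = (a1 + a2 - a3, cos (a3 - b) / cos (a1 - b))
     in cos (a1 - b) * cos (a3 - b) > 0 \<longrightarrow>
       (2 * cos (a1 + a2 - a3) + cos a3 < 0 \<longrightarrow> locally_stable (branch_field a1 a2 a3) e) \<and>
       (2 * cos (a1 + a2 - a3) + cos a3 > 0 \<longrightarrow> unstable (branch_field a1 a2 a3) e)"
  unfolding Let_def
proof (intro impI)
  define b where "b = (a1 + a2) / 2"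
  define u where "u = a1 - b"
  define v where "v = a3 - b"
  define th0 where "th0 = a1 + a2 - a3"
  define c1 where "c1 = cos u"
  define c3 where "c3 = cos v"
  assume c13: "cos (a1 - (a1 + a2) / 2) * cos (a3 - (a1 + a2) / 2) > 0"
  then have c1c3: "c1 * c3 > 0" by (simp add: c1_def c3_def u_def v_def b_def)
  have e1: "a1 = b + u" and e2: "a2 = b - u" and e3: "a3 = b + v" and e4: "th0 = b - v"
    by (simp_all add: u_def v_def b_def th0_def)
  have h1: "sin a1 + sin a2 = 2 * sin b * c1" unfolding e1 e2 c1_def by (simp add: sin_add sin_diff)
  have h2: "cos a1 + cos a2 = 2 * cos b * c1" unfolding e1 e2 c1_def by (simp add: cos_add cos_diff)
  have h3: "sin a3 + sin th0 = 2 * sin b * c3" unfolding e3 e4 c3_def by (simp add: sin_add sin_diff)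
  have h4: "cos a3 + cos th0 = 2 * cos b * c3" unfolding e3 e4 c3_def by (simp add: cos_add cos_diff)
  have h5: "cos b * cos th0 + sin b * sin th0 = c3"
  proof -
    have "cos (th0 - b) = cos th0 * cos b + sin th0 * sin b" by (rule cos_diff)
    moreover have "th0 - b = - v" using e4 by simp
    ultimately show ?thesis by (simp add: c3_def algebra_simps)
  qed
  note A = partb_alg[OF c1c3 h1 h2 h3 h4 h5]
  define r0 where "r0 = c3 / c1"
  have r0: "r0 > 0" using c1c3 unfolding r0_def by (auto simp: zero_less_divide_iff zero_less_mult_iff)
  have Fe: "branch_field a1 a2 a3 (th0, r0) = (0, 0)"
    using A(1,2) by (simp add: branch_field_def r0_def)
  have D: "(cos th0 / r0) * (cos a1 + cos a2) - (-(sin a3 + sin th0) / r0^2) * sin th0 > 0"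
  proof -
    have c1nz: "c1 \<noteq> 0" using c1c3 by auto
    have "(cos th0 / r0) * (cos a1 + cos a2) - (-(sin a3 + sin th0) / r0^2) * sin th0 = 2 * c1^2"
      using A(4) by (simp add: r0_def)
    moreover have "2 * c1^2 > 0" using c1nz by simp
    ultimately show ?thesis by simp
  qed
  have tau: "cos th0 / r0 + (cos a1 + cos a2) = (c1/c3) * (2 * cos th0 + cos a3)"
    using A(3) by (simp add: r0_def)
  have q: "c1 / c3 > 0" using c1c3 by (simp add: zero_less_divide_iff zero_less_mult_iff)
  have eq: "(a1 + a2 - a3, cos (a3 - (a1 + a2) / 2) / cos (a1 - (a1 + a2) / 2)) = (th0, r0)"
    by (simp add: th0_def r0_def c1_def c3_def u_def v_def b_def)
  show "(2 * cos (a1 + a2 - a3) + cos a3 < 0 \<longrightarrow> locally_stable (branch_field a1 a2 a3)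
          (a1 + a2 - a3, cos (a3 - (a1 + a2) / 2) / cos (a1 - (a1 + a2) / 2))) \<and>
        (0 < 2 * cos (a1 + a2 - a3) + cos a3 \<longrightarrow> unstable (branch_field a1 a2 a3)
          (a1 + a2 - a3, cos (a3 - (a1 + a2) / 2) / cos (a1 - (a1 + a2) / 2)))"
    unfolding eq
  proof (intro conjI impI)
    assume "2 * cos (a1 + a2 - a3) + cos a3 < 0"
    then have "2 * cos th0 + cos a3 < 0" by (simp add: th0_def)
    then have "(c1/c3) * (2 * cos th0 + cos a3) < 0" using q by (rule mult_pos_neg[rotated])
    then show "locally_stable (branch_field a1 a2 a3) (th0, r0)" unfolding tau[symmetric]
      by (rule branch_stable[OF r0 Fe _ D])
  next
    assume "0 < 2 * cos (a1 + a2 - a3) + cos a3"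
    then have "2 * cos th0 + cos a3 > 0" by (simp add: th0_def)
    then have "(c1/c3) * (2 * cos th0 + cos a3) > 0" using q by (rule mult_pos_pos[rotated])
    then show "unstable (branch_field a1 a2 a3) (th0, r0)" unfolding tau[symmetric]
      by (rule branch_unstable[OF r0 Fe _ D])
  qed
qed

theorem proposition3:
  fixes a1 a2 a3 :: real
  shows
   "((\<exists>k::int. a1 + a2 = pi + 2 * of_int k * pi) \<and> sin a1 * sin a3 > 0 \<longrightarrow>
       (cos a3 > 0 \<longrightarrow> locally_stable (branch_field a1 a2 a3) (pi - a3, sin a3 / sin a1)) \<and>
       (cos a3 < 0 \<longrightarrow> unstable (branch_field a1 a2 a3) (pi - a3, sin a3 / sin a1)))
    \<and>
    (let b = (a1 + a2) / 2;
         e = (a1 + a2 - a3, cos (a3 - b) / cos (a1 - b))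
     in cos (a1 - b) * cos (a3 - b) > 0 \<longrightarrow>
       (2 * cos (a1 + a2 - a3) + cos a3 < 0 \<longrightarrow> locally_stable (branch_field a1 a2 a3) e) \<and>
       (2 * cos (a1 + a2 - a3) + cos a3 > 0 \<longrightarrow> unstable (branch_field a1 a2 a3) e))"
  using part_a[of a1 a2 a3] part_b[of a1 a2 a3] by blast


end
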